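(* Let $f:\mathbb R^n\to\mathbb R\cup\{+\infty\}$, $g:\mathbb R^m\to\mathbb R\cup\{+\infty\}$, $h:\mathbb R^n\to\mathbb R\cup\{+\infty\}$ be closed convex functions, where $h$ is differentiable on its domain $\operatorname{dom} h$, which is an open convex set, and $f+h$ and $g$ are proper. Let $A\in\mathbb R^{m\times n}$. Let $X\subseteq\mathbb R^n$ and $Z\subseteq\mathbb R^m$ be compact convex sets, and suppose the primal problem $\text{minimize } f(x)+g(Ax)+h(x)$ has an optimal solution $x^\star\in\operatorname{int}(X)$ and the dual problem $\text{maximize } -(f+h)^*(-A^Tz)-g^*(z)$ has an optimal solution $z^\star\in\operatorname{int}(Z)$. Define, for $x\in\operatorname{dom}(f+h)$ and $z\in\operatorname{dom} g^*$, \[\eta(x,z)=\sup_{z'\in Z}\mathcal L(x,z')-\inf_{x'\in X}\mathcal L(x',z).\] Then $\eta(x,z)\ge 0$ for all $x\in\operatorname{dom}(f+h)$ and $z\in\operatorname{dom} g^*$, and $\eta(x,z)=0$ only if $x$ is optimal for the primal problem and $z$ is optimal for the dual problem.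
   Context: $g^*$ and $(f+h)^*$ denote convex conjugates. The Lagrangian is $\mathcal L(x,z)=f(x)+h(x)+\langle z,Ax\rangle-g^*(z)$, with the convention $\mathcal L(x,z)=+\infty$ if $x\notin\operatorname{dom}(f+h)$ and $\mathcal L(x,z)=-\infty$ if $x\in\operatorname{dom}(f+h)$ and $z\notin\operatorname{dom} g^*$. It is a standing assumption that the primal--dual optimality conditions $0\in\partial f(x)+\nabla h(x)+A^Tz$, $0\in\partial g^*(z)-Ax$ have a solution. *)

theory Defs
  imports "HOL-Analysis.Analysis"
begin

definition edom :: "('a \<Rightarrow> ereal) \<Rightarrow> 'a set" where
  "edom F = {x. F x < \<infinity>}"

definition epigraph :: "('a \<Rightarrow> ereal) \<Rightarrow> ('a \<times> real) set" where
  "epigraph F = {(x, r). F x \<le> ereal r}"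

definition convex_fun :: "('a::real_vector \<Rightarrow> ereal) \<Rightarrow> bool" where
  "convex_fun F \<longleftrightarrow> convex (epigraph F)"

definition closed_fun :: "('a::topological_space \<Rightarrow> ereal) \<Rightarrow> bool" where
  "closed_fun F \<longleftrightarrow> closed (epigraph F)"

definition proper_fun :: "('a \<Rightarrow> ereal) \<Rightarrow> bool" where
  "proper_fun F \<longleftrightarrow> (\<forall>x. F x \<noteq> -\<infinity>) \<and> (\<exists>x. F x < \<infinity>)"

definition conj_fun :: "('a::real_inner \<Rightarrow> ereal) \<Rightarrow> 'a \<Rightarrow> ereal" where
  "conj_fun F y = (SUP x. ereal (y \<bullet> x) - F x)"

definition subdiff :: "('a::real_inner \<Rightarrow> ereal) \<Rightarrow> 'a \<Rightarrow> 'a set" where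
  "subdiff F x = {v. \<bar>F x\<bar> \<noteq> \<infinity> \<and> (\<forall>y. F x + ereal (v \<bullet> (y - x)) \<le> F y)}"

definition lagrangian ::
  "(real^'n \<Rightarrow> ereal) \<Rightarrow> (real^'m \<Rightarrow> ereal) \<Rightarrow> (real^'n \<Rightarrow> ereal) \<Rightarrow> real^'n^'m
     \<Rightarrow> real^'n \<Rightarrow> real^'m \<Rightarrow> ereal" where
  "lagrangian f g h A x z =
     (if x \<notin> edom (\<lambda>y. f y + h y) then \<infinity>
      else if z \<notin> edom (conj_fun g) then -\<infinity>
      else f x + h x + ereal (z \<bullet> (A *v x)) - conj_fun g z)"

definition primal_obj ::
  "(real^'n \<Rightarrow> ereal) \<Rightarrow> (real^'m \<Rightarrow> ereal) \<Rightarrow> (real^'n \<Rightarrow> ereal) \<Rightarrow> real^'n^'m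
     \<Rightarrow> real^'n \<Rightarrow> ereal" where
  "primal_obj f g h A x = f x + g (A *v x) + h x"

definition dual_obj ::
  "(real^'n \<Rightarrow> ereal) \<Rightarrow> (real^'m \<Rightarrow> ereal) \<Rightarrow> (real^'n \<Rightarrow> ereal) \<Rightarrow> real^'n^'m
     \<Rightarrow> real^'m \<Rightarrow> ereal" where
  "dual_obj f g h A z =
     - conj_fun (\<lambda>y. f y + h y) (- (transpose A *v z)) - conj_fun g z"

definition primal_optimal where
  "primal_optimal f g h A x \<longleftrightarrow>
     primal_obj f g h A x < \<infinity> \<and> (\<forall>y. primal_obj f g h A x \<le> primal_obj f g h A y)"

definition dual_optimal where
  "dual_optimal f g h A z \<longleftrightarrow>
     dual_obj f g h A z > -\<infinity> \<and> (\<forall>w. dual_obj f g h A w \<le> dual_obj f g h A z)"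

definition gap_eta where
  "gap_eta f g h A X Z x z =
     (SUP z'\<in>Z. lagrangian f g h A x z') - (INF x'\<in>X. lagrangian f g h A x' z)"

end

theory Submission
  imports Defs
begin


lemma conv_epi:
  assumes "convex_fun F" "F u \<le> ereal p" "F v \<le> ereal q" "0 \<le> t" "t \<le> 1"
  shows "F ((1-t) *\<^sub>R u + t *\<^sub>R v) \<le> ereal ((1-t)*p + t*q)"
proof -
  have "(u,p) \<in> epigraph F" "(v,q) \<in> epigraph F" using assms by (auto simp: epigraph_def)
  hence "(1-t) *\<^sub>R (u,p) + t *\<^sub>R (v,q) \<in> epigraph F"
    using assms(1,4,5) unfolding convex_fun_def convex_def
    by (metis (no_types, lifting) diff_add_cancel diff_ge_0_iff_ge)
  thus ?thesis by (simp add: epigraph_def)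
qed

lemma grad_ineq:
  fixes \<phi> :: "'a::real_inner \<Rightarrow> real"
  assumes conv: "\<And>t. 0 \<le> t \<Longrightarrow> t \<le> 1 \<Longrightarrow> \<phi> ((1-t) *\<^sub>R x0 + t *\<^sub>R y) \<le> (1-t) * \<phi> x0 + t * \<phi> y"
    and der: "(\<phi> has_derivative (\<lambda>v. d \<bullet> v)) (at x0)"
  shows "\<phi> x0 + d \<bullet> (y - x0) \<le> \<phi> y"
proof (rule ccontr)
  assume na: "\<not> \<phi> x0 + d \<bullet> (y - x0) \<le> \<phi> y"
  define \<delta> where "\<delta> = \<phi> x0 + d \<bullet> (y - x0) - \<phi> y"
  have dpos: "\<delta> > 0" using na by (simp add: \<delta>_def)
  have yx: "y \<noteq> x0" using dpos by (auto simp: \<delta>_def)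
  define v where "v = y - x0"
  have nv: "norm v > 0" using yx by (simp add: v_def)
  define e where "e = \<delta> / (2 * norm v)"
  have epos: "e > 0" using dpos nv by (simp add: e_def)
  obtain r where r: "r > 0" "\<And>z. norm (z - x0) < r \<Longrightarrow> norm (\<phi> z - \<phi> x0 - d \<bullet> (z - x0)) \<le> e * norm (z - x0)"
    using der epos unfolding has_derivative_at_alt by meson
  define t where "t = min 1 (r / (2 * norm v))"
  have t0: "t > 0" "t \<le> 1" using r nv by (auto simp: t_def)
  have "t * norm v \<le> r/2" using nv by (simp add: t_def min_def field_simps)
  hence tn: "norm ((x0 + t *\<^sub>R v) - x0) < r" using t0 r by simp
  have eq: "(1-t) *\<^sub>R x0 + t *\<^sub>R y = x0 + t *\<^sub>R v" by (simp add: v_def algebra_simps)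
  have c: "\<phi> (x0 + t *\<^sub>R v) \<le> (1-t) * \<phi> x0 + t * \<phi> y" using conv[OF less_imp_le[OF t0(1)] t0(2)] eq by simp
  have "norm (\<phi> (x0 + t *\<^sub>R v) - \<phi> x0 - d \<bullet> (t *\<^sub>R v)) \<le> e * (t * norm v)"
    using r(2)[OF tn] t0 by simp
  moreover have "\<phi> (x0 + t *\<^sub>R v) - \<phi> x0 - d \<bullet> (t *\<^sub>R v) \<le> - t * \<delta>"
    using c by (simp add: \<delta>_def v_def algebra_simps)
  moreover have "e * (t * norm v) = t * \<delta> / 2" using nv by (simp add: e_def field_simps)
  ultimately have "t * \<delta> \<le> t * \<delta> / 2" unfolding real_norm_def by linarith
  thus False using t0 dpos by simp
qed

lemma loc_glob:
  fixes \<phi> :: "'a::real_normed_vector \<Rightarrow> real"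
  assumes conv: "\<And>t. 0 \<le> t \<Longrightarrow> t \<le> 1 \<Longrightarrow> (1-t) *\<^sub>R p + t *\<^sub>R y \<in> D
        \<and> \<phi> ((1-t) *\<^sub>R p + t *\<^sub>R y) \<le> (1-t) * \<phi> p + t * \<phi> y"
    and pX: "p \<in> interior X" and mn: "\<And>u. u \<in> X \<Longrightarrow> u \<in> D \<Longrightarrow> \<phi> p \<le> \<phi> u"
  shows "\<phi> p \<le> \<phi> y"
proof (cases "y = p")
  case True thus ?thesis by simp
next
  case False
  obtain e where e: "e > 0" "ball p e \<subseteq> X" using pX by (meson mem_interior)
  have nv: "norm (y - p) > 0" using False by simp
  define t where "t = min (1/2) (e / (2 * norm (y - p)))"
  have t0: "t > 0" "t \<le> 1" using e nv by (auto simp: t_def)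
  have "t * norm (y - p) \<le> e/2" using nv by (simp add: t_def min_def field_simps)
  moreover have "dist p ((1-t) *\<^sub>R p + t *\<^sub>R y) = t * norm (y - p)"
  proof -
    have "p - ((1-t) *\<^sub>R p + t *\<^sub>R y) = t *\<^sub>R (p - y)" by (simp add: algebra_simps)
    thus ?thesis using t0 by (simp add: dist_norm norm_minus_commute)
  qed
  ultimately have "(1-t) *\<^sub>R p + t *\<^sub>R y \<in> X" using e by (auto simp: subset_iff)
  with conv[OF less_imp_le[OF t0(1)] t0(2)] mn
  have "\<phi> p \<le> (1-t) * \<phi> p + t * \<phi> y" by force
  hence "t * \<phi> p \<le> t * \<phi> y" by (simp add: algebra_simps)
  thus ?thesis using t0 by simp
qed



lemma conj_upper: "ereal (w \<bullet> u) - F u \<le> conj_fun F w"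
  unfolding conj_fun_def by (rule SUP_upper) simp

lemma conj_le:
  assumes "\<And>u r. F u = ereal r \<Longrightarrow> w \<bullet> u - r \<le> K" "\<And>u. F u \<noteq> -\<infinity>"
  shows "conj_fun F w \<le> ereal K"
  unfolding conj_fun_def
proof (rule SUP_least)
  fix u
  show "ereal (w \<bullet> u) - F u \<le> ereal K"
    using assms(1)[of u] assms(2)[of u] by (cases "F u") auto
qed

lemma conj_fin_below:
  assumes "proper_fun F" shows "conj_fun F w \<noteq> -\<infinity>"
proof -
  obtain u0 where "F u0 < \<infinity>" using assms by (auto simp: proper_fun_def)
  moreover have "F u0 \<noteq> -\<infinity>" using assms by (auto simp: proper_fun_def)
  ultimately obtain r where r: "F u0 = ereal r" by (cases "F u0") auto
  have "ereal (w \<bullet> u0) - F u0 \<le> conj_fun F w" by (rule conj_upper)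
  thus ?thesis using r by auto
qed

lemma FM_aux:
  fixes g :: "'a::euclidean_space \<Rightarrow> ereal"
  assumes cl: "closed_fun g" and cv: "convex_fun g" and pr: "proper_fun g"
    and ay: "ereal \<alpha> < g y"
  shows "(\<exists>w. ereal \<alpha> < ereal (w \<bullet> y) - conj_fun g w) \<or> (\<exists>a c. a \<bullet> y < c \<and> (\<forall>u. g u < \<infinity> \<longrightarrow> c < a \<bullet> u))"
proof -
  have ninf: "\<And>u. g u \<noteq> -\<infinity>" using pr by (auto simp: proper_fun_def)
  have nE: "(y, \<alpha>) \<notin> epigraph g" using ay by (auto simp: epigraph_def)
  obtain ab c where sep: "ab \<bullet> (y, \<alpha>) < c" "\<forall>p\<in>epigraph g. c < ab \<bullet> p"
    using separating_hyperplane_closed_point[OF _ _ nE] cl cv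
    by (auto simp: closed_fun_def convex_fun_def)
  obtain a b where ab: "ab = (a, b)" by (cases ab)
  have sep1: "a \<bullet> y + b * \<alpha> < c" using sep ab by simp
  have sep2: "\<And>u r. g u \<le> ereal r \<Longrightarrow> c < a \<bullet> u + b * r"
    using sep ab by (auto simp: epigraph_def)
  obtain u0 where u0: "g u0 < \<infinity>" using pr by (auto simp: proper_fun_def)
  then obtain r0 where r0: "g u0 = ereal r0" using ninf[of u0] by (cases "g u0") auto
  have b0: "b \<ge> 0"
  proof (rule ccontr)
    assume "\<not> b \<ge> 0" hence bn: "b < 0" by simp
    define r where "r = max r0 ((c - a \<bullet> u0)/b)"
    have "g u0 \<le> ereal r" using r0 by (simp add: r_def)
    hence "c < a \<bullet> u0 + b * r" by (rule sep2)
    moreover have "b * r \<le> b * ((c - a \<bullet> u0)/b)"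
      using bn by (intro mult_left_mono_neg) (auto simp: r_def)
    ultimately show False using bn by simp
  qed
  show ?thesis
  proof (cases "b = 0")
    case True
    have "\<forall>u. g u < \<infinity> \<longrightarrow> c < a \<bullet> u"
    proof (intro allI impI)
      fix u assume "g u < \<infinity>"
      then obtain r where "g u = ereal r" using ninf[of u] by (cases "g u") auto
      thus "c < a \<bullet> u" using sep2[of u r] True by simp
    qed
    moreover have "a \<bullet> y < c" using sep1 True by simp
    ultimately show ?thesis by blast
  next
    case False
    hence bp: "b > 0" using b0 by simp
    define w where "w = (- (1/b)) *\<^sub>R a"
    have "conj_fun g w \<le> ereal (- c / b)"
    proof (rule conj_le[OF _ ninf])
      fix u r assume "g u = ereal r"
      hence "c < a \<bullet> u + b * r" using sep2 by simp
      have wu: "w \<bullet> u - r = - ((a \<bullet> u + b*r) / b)" using bp by (simp add: w_def field_simps)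
      have "c / b \<le> (a \<bullet> u + b*r)/b" using bp \<open>c < a \<bullet> u + b * r\<close> by (intro divide_right_mono) auto
      thus "w \<bullet> u - r \<le> - c / b" by (simp add: wu)
    qed
    hence "ereal (w \<bullet> y + c / b) \<le> ereal (w \<bullet> y) - conj_fun g w"
      by (cases "conj_fun g w") auto
    moreover have "\<alpha> < w \<bullet> y + c / b" using sep1 bp by (simp add: w_def field_simps)
    ultimately have "ereal \<alpha> < ereal (w \<bullet> y) - conj_fun g w"
      by (meson less_ereal.simps(1) order_less_le_trans)
    thus ?thesis by blast
  qed
qed

lemma conj_dom_ne:
  fixes g :: "'a::euclidean_space \<Rightarrow> ereal"
  assumes cl: "closed_fun g" and cv: "convex_fun g" and pr: "proper_fun g"
  shows "\<exists>w. conj_fun g w < \<infinity>"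
proof -
  have ninf: "\<And>u. g u \<noteq> -\<infinity>" using pr by (auto simp: proper_fun_def)
  obtain u0 where u0: "g u0 < \<infinity>" using pr by (auto simp: proper_fun_def)
  then obtain r0 where r0: "g u0 = ereal r0" using ninf[of u0] by (cases "g u0") auto
  have "ereal (r0 - 1) < g u0" using r0 by simp
  from FM_aux[OF cl cv pr this] u0 obtain w where "ereal (r0 - 1) < ereal (w \<bullet> u0) - conj_fun g w"
    by force
  hence "conj_fun g w < \<infinity>" by (cases "conj_fun g w") auto
  thus ?thesis by blast
qed

lemma FM:
  fixes g :: "'a::euclidean_space \<Rightarrow> ereal"
  assumes cl: "closed_fun g" and cv: "convex_fun g" and pr: "proper_fun g"
    and ay: "ereal \<alpha> < g y"
  shows "\<exists>w. ereal \<alpha> < ereal (w \<bullet> y) - conj_fun g w"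
proof -
  have ninf: "\<And>u. g u \<noteq> -\<infinity>" using pr by (auto simp: proper_fun_def)
  from FM_aux[OF cl cv pr ay] show ?thesis
  proof
    assume "\<exists>a c. a \<bullet> y < c \<and> (\<forall>u. g u < \<infinity> \<longrightarrow> c < a \<bullet> u)"
    then obtain a c where ac: "a \<bullet> y < c" "\<And>u. g u < \<infinity> \<Longrightarrow> c < a \<bullet> u" by blast
    obtain w0 where w0: "conj_fun g w0 < \<infinity>" using conj_dom_ne[OF cl cv pr] by blast
    then obtain G0 where G0: "conj_fun g w0 = ereal G0" using conj_fin_below[OF pr, of w0]
      by (cases "conj_fun g w0") auto
    define lam where "lam = max 0 ((\<alpha> + 1 - w0 \<bullet> y + G0) / (c - a \<bullet> y))"
    have l0: "lam \<ge> 0" by (simp add: lam_def)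
    have "(\<alpha> + 1 - w0 \<bullet> y + G0) / (c - a \<bullet> y) \<le> lam" by (simp add: lam_def)
    hence l1: "\<alpha> + 1 - w0 \<bullet> y + G0 \<le> lam * (c - a \<bullet> y)" using ac(1)
      by (simp add: pos_divide_le_eq)
    define w where "w = w0 - lam *\<^sub>R a"
    have "conj_fun g w \<le> ereal (G0 - lam * c)"
    proof (rule conj_le[OF _ ninf])
      fix u r assume ur: "g u = ereal r"
      have "ereal (w0 \<bullet> u) - g u \<le> conj_fun g w0" by (rule conj_upper)
      hence "w0 \<bullet> u - r \<le> G0" using ur G0 by simp
      moreover have "c < a \<bullet> u" using ac(2)[of u] ur by simp
      hence "lam * c \<le> lam * (a \<bullet> u)" using l0 by (simp add: mult_left_mono)
      ultimately show "w \<bullet> u - r \<le> G0 - lam * c" by (simp add: w_def inner_diff_left)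
    qed
    hence "ereal (w \<bullet> y - (G0 - lam * c)) \<le> ereal (w \<bullet> y) - conj_fun g w"
      by (cases "conj_fun g w") auto
    moreover have "\<alpha> < w \<bullet> y - (G0 - lam * c)" using l1 by (simp add: w_def inner_diff_left algebra_simps)
    ultimately have "ereal \<alpha> < ereal (w \<bullet> y) - conj_fun g w"
      by (meson less_ereal.simps(1) order_less_le_trans)
    thus ?thesis by blast
  qed
qed

lemma FM_le:
  fixes g :: "'a::euclidean_space \<Rightarrow> ereal"
  assumes cl: "closed_fun g" and cv: "convex_fun g" and pr: "proper_fun g"
    and B: "\<And>w. ereal (w \<bullet> y) - conj_fun g w \<le> B"
  shows "g y \<le> B"
proof (rule ccontr)
  assume "\<not> g y \<le> B"
  hence "B < g y" by simp
  then obtain \<alpha> where "B < ereal \<alpha>" "ereal \<alpha> < g y" using ereal_dense2 by blast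
  with FM[OF cl cv pr this(2)] B show False by (meson leD less_trans order_less_le_trans)
qed



lemma add_re: "a \<le> ereal q \<Longrightarrow> ereal p + a \<le> ereal (p + q)"
  by (cases a) auto

theorem mainTheorem1:
  fixes f h :: "real^'n \<Rightarrow> ereal" and g :: "real^'m \<Rightarrow> ereal"
    and A :: "real^'n^'m" and X :: "(real^'n) set" and Z :: "(real^'m) set"
    and xs :: "real^'n" and zs :: "real^'m"
  assumes f_cc: "closed_fun f" "convex_fun f"
    and g_cc: "closed_fun g" "convex_fun g"
    and h_cc: "closed_fun h" "convex_fun h"
    and h_dom: "open (edom h)" "convex (edom h)"
    and h_fin: "\<forall>x\<in>edom h. h x \<noteq> -\<infinity>"
    and h_diff: "\<forall>x\<in>edom h. (\<lambda>y. real_of_ereal (h y)) differentiable (at x)"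
    and fh_proper: "proper_fun (\<lambda>x. f x + h x)"
    and g_proper: "proper_fun g"
    and KKT: "\<exists>x z d. x \<in> edom h
                \<and> ((\<lambda>y. real_of_ereal (h y)) has_derivative (\<lambda>v. d \<bullet> v)) (at x)
                \<and> - (transpose A *v z) - d \<in> subdiff f x
                \<and> A *v x \<in> subdiff (conj_fun g) z"
    and X: "compact X" "convex X"
    and Z: "compact Z" "convex Z"
    and xs: "primal_optimal f g h A xs" "xs \<in> interior X"
    and zs: "dual_optimal f g h A zs" "zs \<in> interior Z"
  shows "\<forall>x \<in> edom (\<lambda>y. f y + h y). \<forall>z \<in> edom (conj_fun g).
           gap_eta f g h A X Z x z \<ge> 0
           \<and> (gap_eta f g h A X Z x z = 0 \<longrightarrow>
                primal_optimal f g h A x \<and> dual_optimal f g h A z)"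
proof -
  define F where "F = (\<lambda>y. f y + h y)"
  define G where "G = conj_fun g"
  define RF where "RF = (\<lambda>y. real_of_ereal (F y))"
  define RG where "RG = (\<lambda>z. real_of_ereal (G z))"
  define DF where "DF = edom F"
  define DG where "DG = edom G"
  have tq: "\<And>z x. (transpose A *v z) \<bullet> x = z \<bullet> (A *v x)" by (simp add: dot_lmul_matrix)
  have Fninf: "\<And>x. F x \<noteq> -\<infinity>" using fh_proper by (auto simp: proper_fun_def F_def)
  have gninf: "\<And>x. g x \<noteq> -\<infinity>" using g_proper by (auto simp: proper_fun_def)
  have Gninf: "\<And>z. G z \<noteq> -\<infinity>" using conj_fin_below[OF g_proper] by (simp add: G_def)
  have FCninf: "\<And>v. conj_fun F v \<noteq> -\<infinity>" using conj_fin_below[OF fh_proper] by (simp add: F_def)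
  have Fre: "\<And>x. x \<in> DF \<Longrightarrow> F x = ereal (RF x)"
  proof -
    fix x assume "x \<in> DF" thus "F x = ereal (RF x)" using Fninf[of x]
      by (cases "F x") (auto simp: DF_def edom_def RF_def)
  qed
  have Gre: "\<And>z. z \<in> DG \<Longrightarrow> G z = ereal (RG z)"
  proof -
    fix x assume "x \<in> DG" thus "G x = ereal (RG x)" using Gninf[of x]
      by (cases "G x") (auto simp: DG_def edom_def RG_def)
  qed
  have fhre: "\<And>x. x \<in> DF \<Longrightarrow> \<exists>a b. f x = ereal a \<and> h x = ereal b"
  proof -
    fix x assume "x \<in> DF"
    hence "F x < \<infinity>" "F x \<noteq> -\<infinity>" using Fninf by (auto simp: DF_def edom_def)
    thus "\<exists>a b. f x = ereal a \<and> h x = ereal b" unfolding F_def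
      by (cases "f x"; cases "h x") auto
  qed
  have nDF: "\<And>x. x \<notin> DF \<Longrightarrow> F x = \<infinity>" by (auto simp: DF_def edom_def)
  have Lre: "\<And>x z. x \<in> DF \<Longrightarrow> z \<in> DG \<Longrightarrow> lagrangian f g h A x z = ereal (RF x + z \<bullet> (A *v x) - RG z)"
  proof -
    fix x z assume a: "x \<in> DF" "z \<in> DG"
    have "lagrangian f g h A x z = F x + ereal (z \<bullet> (A *v x)) - G z"
      using a by (simp add: lagrangian_def DF_def DG_def F_def G_def)
    thus "lagrangian f g h A x z = ereal (RF x + z \<bullet> (A *v x) - RG z)" using Fre[OF a(1)] Gre[OF a(2)] by simp
  qed
  have primal_eq: "\<And>x. primal_obj f g h A x = F x + g (A *v x)"
  proof -
    fix x
    show "primal_obj f g h A x = F x + g (A *v x)"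
    proof (cases "x \<in> DF")
      case True then obtain a b where "f x = ereal a" "h x = ereal b" using fhre by blast
      thus ?thesis by (cases "g (A *v x)") (simp_all add: primal_obj_def F_def)
    next
      case False hence "F x = \<infinity>" by (rule nDF)
      hence "f x = \<infinity> \<or> h x = \<infinity>" unfolding F_def by (cases "f x"; cases "h x") auto
      thus ?thesis using \<open>F x = \<infinity>\<close> gninf[of "A *v x"] by (auto simp: primal_obj_def)
    qed
  qed
  have dual_eq: "\<And>z. dual_obj f g h A z = - conj_fun F (- (transpose A *v z)) - G z"
    by (simp add: dual_obj_def F_def G_def)
  have DGi: "\<And>z. z \<in> DG \<longleftrightarrow> conj_fun g z < \<infinity>" by (simp add: DG_def edom_def G_def)
  have DFi: "\<And>x. x \<in> DF \<longleftrightarrow> f x + h x < \<infinity>" by (simp add: DF_def edom_def F_def)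
  have L2: "\<And>x z. x \<in> DF \<Longrightarrow> z \<in> DG \<Longrightarrow> ereal (RF x + z \<bullet> (A *v x) - RG z) \<le> primal_obj f g h A x"
  proof -
    fix x z assume a: "x \<in> DF" "z \<in> DG"
    show "ereal (RF x + z \<bullet> (A *v x) - RG z) \<le> primal_obj f g h A x"
    proof (cases "g (A *v x)")
      case (real r)
      have "ereal (z \<bullet> (A *v x)) - g (A *v x) \<le> G z" unfolding G_def by (rule conj_upper)
      hence "z \<bullet> (A *v x) - r \<le> RG z" using real Gre[OF a(2)] by simp
      thus ?thesis using real by (simp add: primal_eq Fre[OF a(1)])
    next
      case PInf thus ?thesis by (simp add: primal_eq Fre[OF a(1)])
    next
      case MInf thus ?thesis using gninf by simp
    qed
  qed
  have L1: "\<And>x z. x \<in> DF \<Longrightarrow> z \<in> DG \<Longrightarrow> dual_obj f g h A z \<le> ereal (RF x + z \<bullet> (A *v x) - RG z)"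
  proof -
    fix x z assume a: "x \<in> DF" "z \<in> DG"
    have "ereal ((- (transpose A *v z)) \<bullet> x) - F x \<le> conj_fun F (- (transpose A *v z))" by (rule conj_upper)
    hence c: "ereal (- (z \<bullet> (A *v x)) - RF x) \<le> conj_fun F (- (transpose A *v z))"
      using Fre[OF a(1)] by (simp add: dot_lmul_matrix)
    show "dual_obj f g h A z \<le> ereal (RF x + z \<bullet> (A *v x) - RG z)"
      using c FCninf[of "- (transpose A *v z)"]
      by (cases "conj_fun F (- (transpose A *v z))") (auto simp: dual_eq Gre[OF a(2)])
  qed
  have Fconv: "\<And>u v t. u \<in> DF \<Longrightarrow> v \<in> DF \<Longrightarrow> 0 \<le> t \<Longrightarrow> t \<le> 1 \<Longrightarrow>
      (1-t) *\<^sub>R u + t *\<^sub>R v \<in> DF \<and> RF ((1-t) *\<^sub>R u + t *\<^sub>R v) \<le> (1-t) * RF u + t * RF v"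
  proof -
    fix u v and t :: real assume a: "u \<in> DF" "v \<in> DF" "0 \<le> t" "t \<le> 1"
    obtain a1 b1 where u: "f u = ereal a1" "h u = ereal b1" using fhre[OF a(1)] by blast
    obtain a2 b2 where v: "f v = ereal a2" "h v = ereal b2" using fhre[OF a(2)] by blast
    define c where "c = (1-t) *\<^sub>R u + t *\<^sub>R v"
    have "f c \<le> ereal ((1-t)*a1 + t*a2)" unfolding c_def
      by (rule conv_epi[OF f_cc(2)]) (use u v a in auto)
    moreover have "h c \<le> ereal ((1-t)*b1 + t*b2)" unfolding c_def
      by (rule conv_epi[OF h_cc(2)]) (use u v a in auto)
    ultimately have "F c \<le> ereal ((1-t)*a1 + t*a2) + ereal ((1-t)*b1 + t*b2)"
      unfolding F_def by (rule add_mono)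
    hence Fc: "F c \<le> ereal ((1-t) * RF u + t * RF v)"
      using u v by (simp add: RF_def F_def algebra_simps)
    hence "c \<in> DF" by (auto simp: DF_def edom_def)
    moreover have "RF c \<le> (1-t) * RF u + t * RF v" using Fc Fre[OF \<open>c \<in> DF\<close>] by simp
    ultimately show "(1-t) *\<^sub>R u + t *\<^sub>R v \<in> DF \<and> RF ((1-t) *\<^sub>R u + t *\<^sub>R v) \<le> (1-t) * RF u + t * RF v"
      by (simp add: c_def)
  qed
  have Gconv: "\<And>u v t. u \<in> DG \<Longrightarrow> v \<in> DG \<Longrightarrow> 0 \<le> t \<Longrightarrow> t \<le> 1 \<Longrightarrow>
      (1-t) *\<^sub>R u + t *\<^sub>R v \<in> DG \<and> RG ((1-t) *\<^sub>R u + t *\<^sub>R v) \<le> (1-t) * RG u + t * RG v"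
  proof -
    fix u v and t :: real assume a: "u \<in> DG" "v \<in> DG" "0 \<le> t" "t \<le> 1"
    define c where "c = (1-t) *\<^sub>R u + t *\<^sub>R v"
    have Gc: "G c \<le> ereal ((1-t) * RG u + t * RG v)" unfolding G_def
    proof (rule conj_le[OF _ gninf])
      fix y r assume yr: "g y = ereal r"
      have "ereal (u \<bullet> y) - g y \<le> G u" unfolding G_def by (rule conj_upper)
      hence 1: "u \<bullet> y - r \<le> RG u" using yr Gre[OF a(1)] by simp
      have "ereal (v \<bullet> y) - g y \<le> G v" unfolding G_def by (rule conj_upper)
      hence 2: "v \<bullet> y - r \<le> RG v" using yr Gre[OF a(2)] by simp
      have "c \<bullet> y - r = (1-t) * (u \<bullet> y - r) + t * (v \<bullet> y - r)"
        by (simp add: c_def inner_add_left algebra_simps)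
      also have "\<dots> \<le> (1-t) * RG u + t * RG v"
        using 1 2 a by (intro add_mono mult_left_mono) auto
      finally show "c \<bullet> y - r \<le> (1-t) * RG u + t * RG v" .
    qed
    hence "c \<in> DG" by (auto simp: DG_def edom_def)
    moreover have "RG c \<le> (1-t) * RG u + t * RG v" using Gc Gre[OF \<open>c \<in> DG\<close>] by simp
    ultimately show "(1-t) *\<^sub>R u + t *\<^sub>R v \<in> DG \<and> RG ((1-t) *\<^sub>R u + t *\<^sub>R v) \<le> (1-t) * RG u + t * RG v"
      by (simp add: c_def)
  qed
  obtain x0 z0 d where x0h: "x0 \<in> edom h"
    and hd: "((\<lambda>y. real_of_ereal (h y)) has_derivative (\<lambda>v. d \<bullet> v)) (at x0)"
    and sf: "- (transpose A *v z0) - d \<in> subdiff f x0"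
    and sg: "A *v x0 \<in> subdiff (conj_fun g) z0" using KKT by blast
  obtain fa where fa: "f x0 = ereal fa" using sf by (cases "f x0") (auto simp: subdiff_def)
  have "h x0 \<noteq> -\<infinity>" "h x0 < \<infinity>" using x0h h_fin by (auto simp: edom_def)
  then obtain hb where hb: "h x0 = ereal hb" by (cases "h x0") auto
  have x0F: "x0 \<in> DF" using fa hb by (simp add: DFi)
  have RFx0: "RF x0 = fa + hb" using fa hb by (simp add: RF_def F_def)
  have z0G: "z0 \<in> DG" using sg by (auto simp: subdiff_def DGi)
  have S1: "primal_obj f g h A x0 \<le> ereal (RF x0 + z0 \<bullet> (A *v x0) - RG z0)"
  proof -
    have "g (A *v x0) \<le> ereal (z0 \<bullet> (A *v x0) - RG z0)"
    proof (rule FM_le[OF g_cc g_proper])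
      fix w
      show "ereal (w \<bullet> (A *v x0)) - conj_fun g w \<le> ereal (z0 \<bullet> (A *v x0) - RG z0)"
      proof (cases "w \<in> DG")
        case True
        have "G z0 + ereal ((A *v x0) \<bullet> (w - z0)) \<le> G w" using sg by (auto simp: subdiff_def G_def)
        hence "RG z0 + (A *v x0) \<bullet> (w - z0) \<le> RG w" using Gre[OF True] Gre[OF z0G] by simp
        hence "w \<bullet> (A *v x0) - RG w \<le> z0 \<bullet> (A *v x0) - RG z0"
          by (simp add: inner_diff_right inner_commute)
        thus ?thesis using Gre[OF True] by (simp add: G_def)
      next
        case False thus ?thesis by (simp add: DGi)
      qed
    qed
    hence "F x0 + g (A *v x0) \<le> ereal (RF x0 + (z0 \<bullet> (A *v x0) - RG z0))"
      unfolding Fre[OF x0F] by (rule add_re)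
    thus ?thesis by (simp add: primal_eq add_diff_eq)
  qed
  have S2: "ereal (RF x0 + z0 \<bullet> (A *v x0) - RG z0) \<le> dual_obj f g h A z0"
  proof -
    define q where "q = transpose A *v z0"
    have qx: "\<And>x. q \<bullet> x = z0 \<bullet> (A *v x)" by (simp add: q_def dot_lmul_matrix)
    have CB: "conj_fun F (- q) \<le> ereal (- (q \<bullet> x0) - RF x0)"
    proof (rule conj_le[OF _ Fninf])
      fix y r assume yr: "F y = ereal r"
      hence yF: "y \<in> DF" by (simp add: DF_def edom_def)
      obtain a b where ab: "f y = ereal a" "h y = ereal b" using fhre[OF yF] by blast
      have r: "r = a + b" using yr ab by (simp add: F_def)
      have "f x0 + ereal ((- q - d) \<bullet> (y - x0)) \<le> f y" using sf by (auto simp: subdiff_def q_def)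
      hence 1: "fa + (- q - d) \<bullet> (y - x0) \<le> a" using fa ab by simp
      have yh: "y \<in> edom h" using ab by (simp add: edom_def)
      have "real_of_ereal (h x0) + d \<bullet> (y - x0) \<le> real_of_ereal (h y)"
      proof (rule grad_ineq[OF _ hd])
        fix t :: real assume t: "0 \<le> t" "t \<le> 1"
        have "h ((1-t) *\<^sub>R x0 + t *\<^sub>R y) \<le> ereal ((1-t)*hb + t*b)"
          by (rule conv_epi[OF h_cc(2)]) (use hb ab t in auto)
        moreover have "(1-t) *\<^sub>R x0 + t *\<^sub>R y \<in> edom h"
          using h_dom(2) x0h yh t unfolding convex_alt by auto
        hence "h ((1-t) *\<^sub>R x0 + t *\<^sub>R y) \<noteq> -\<infinity>" using h_fin by blast
        ultimately show "real_of_ereal (h ((1-t) *\<^sub>R x0 + t *\<^sub>R y)) \<le> (1-t) * real_of_ereal (h x0) + t * real_of_ereal (h y)"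
          using hb ab by (cases "h ((1-t) *\<^sub>R x0 + t *\<^sub>R y)") (auto simp: edom_def)
      qed
      hence 2: "hb + d \<bullet> (y - x0) \<le> b" using hb ab by simp
      show "(- q) \<bullet> y - r \<le> - (q \<bullet> x0) - RF x0"
        using 1 2 r RFx0 by (simp add: inner_diff_left inner_diff_right algebra_simps)
    qed
    have de: "dual_obj f g h A z0 = - conj_fun F (- q) - G z0" unfolding q_def by (rule dual_eq)
    show ?thesis using CB FCninf[of "- q"] Gre[OF z0G] unfolding de
      by (cases "conj_fun F (- q)") (auto simp: qx)
  qed
  have xsF: "xs \<in> DF"
  proof (rule ccontr)
    assume "xs \<notin> DF"
    hence "primal_obj f g h A xs = \<infinity>" using nDF gninf by (simp add: primal_eq)
    thus False using xs(1) by (simp add: primal_optimal_def)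
  qed
  have zsG: "zs \<in> DG"
  proof (rule ccontr)
    assume "zs \<notin> DG"
    hence "G zs = \<infinity>" by (simp add: DG_def edom_def)
    hence "dual_obj f g h A zs = -\<infinity>" using FCninf[of "- (transpose A *v zs)"]
      by (cases "conj_fun F (- (transpose A *v zs))") (auto simp: dual_eq)
    thus False using zs(1) by (simp add: dual_optimal_def)
  qed
  have SD: "primal_obj f g h A xs \<le> dual_obj f g h A zs"
  proof -
    have "primal_obj f g h A xs \<le> primal_obj f g h A x0" using xs(1) by (simp add: primal_optimal_def)
    also have "\<dots> \<le> dual_obj f g h A z0" using S1 S2 by (rule order_trans)
    also have "\<dots> \<le> dual_obj f g h A zs" using zs(1) by (simp add: dual_optimal_def)
    finally show ?thesis .
  qed
  show ?thesis
  proof (intro ballI)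
    fix x z assume xF0: "x \<in> edom (\<lambda>y. f y + h y)" and zG0: "z \<in> edom (conj_fun g)"
    have xF: "x \<in> DF" using xF0 by (simp add: DF_def F_def)
    have zG: "z \<in> DG" using zG0 by (simp add: DG_def G_def)
    define S where "S = (SUP z'\<in>Z. lagrangian f g h A x z')"
    define I where "I = (INF x'\<in>X. lagrangian f g h A x' z)"
    have eta: "gap_eta f g h A X Z x z = S - I" by (simp add: gap_eta_def S_def I_def)
    define Px where "Px = RF x + zs \<bullet> (A *v x) - RG zs"
    define Pz where "Pz = RF xs + z \<bullet> (A *v xs) - RG z"
    have xsX: "xs \<in> X" using xs(2) interior_subset by blast
    have zsZ: "zs \<in> Z" using zs(2) interior_subset by blast
    have SPx: "ereal Px \<le> S" unfolding S_def Px_def Lre[OF xF zsG, symmetric] by (rule SUP_upper[OF zsZ])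
    have IPz: "I \<le> ereal Pz" unfolding I_def Pz_def Lre[OF xsF zG, symmetric] by (rule INF_lower[OF xsX])
    have PzPx: "ereal Pz \<le> ereal Px"
    proof -
      have "ereal Pz \<le> primal_obj f g h A xs" unfolding Pz_def by (rule L2[OF xsF zG])
      also have "\<dots> \<le> dual_obj f g h A zs" by (rule SD)
      also have "\<dots> \<le> ereal Px" unfolding Px_def by (rule L1[OF xF zsG])
      finally show ?thesis .
    qed
    have SI: "I \<le> S" using SPx IPz PzPx by (meson order_trans)
    have "0 \<le> gap_eta f g h A X Z x z" unfolding eta using SI by (cases S; cases I) auto
    moreover have "gap_eta f g h A X Z x z = 0 \<longrightarrow> primal_optimal f g h A x \<and> dual_optimal f g h A z"
    proof
      assume "gap_eta f g h A X Z x z = 0"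
      hence "S - I = 0" by (simp add: eta)
      hence SeI: "S = I" using SPx IPz by (cases S; cases I) auto
      have Sx: "S = ereal Px" using SPx IPz PzPx SeI by (meson antisym order_trans)
      have Iz: "I = ereal Pz" using SPx IPz PzPx SeI by (meson antisym order_trans)
      have PP: "Px = Pz" using Sx Iz SeI by simp
      have gmax: "\<And>w. w \<in> DG \<Longrightarrow> RF x + w \<bullet> (A *v x) - RG w \<le> Px"
      proof -
        fix w assume wG: "w \<in> DG"
        have "(\<lambda>w. - (RF x + w \<bullet> (A *v x) - RG w)) zs \<le> (\<lambda>w. - (RF x + w \<bullet> (A *v x) - RG w)) w"
        proof (rule loc_glob[where D = DG and X = Z])
          fix t :: real assume t: "0 \<le> t" "t \<le> 1"
          from Gconv[OF zsG wG t] have c: "(1-t) *\<^sub>R zs + t *\<^sub>R w \<in> DG"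
            "RG ((1-t) *\<^sub>R zs + t *\<^sub>R w) \<le> (1-t) * RG zs + t * RG w" by auto
          have e: "((1-t) *\<^sub>R zs + t *\<^sub>R w) \<bullet> (A *v x) = (1-t) * (zs \<bullet> (A *v x)) + t * (w \<bullet> (A *v x))"
            by (simp add: inner_add_left)
          show "(1-t) *\<^sub>R zs + t *\<^sub>R w \<in> DG \<and>
            - (RF x + ((1-t) *\<^sub>R zs + t *\<^sub>R w) \<bullet> (A *v x) - RG ((1-t) *\<^sub>R zs + t *\<^sub>R w))
            \<le> (1-t) * - (RF x + zs \<bullet> (A *v x) - RG zs) + t * - (RF x + w \<bullet> (A *v x) - RG w)"
            using c unfolding e by (simp add: algebra_simps)
        next
          show "zs \<in> interior Z" by (rule zs(2))
        next
          fix u assume u: "u \<in> Z" "u \<in> DG"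
          have "lagrangian f g h A x u \<le> S" unfolding S_def by (rule SUP_upper[OF u(1)])
          hence "RF x + u \<bullet> (A *v x) - RG u \<le> Px" using Lre[OF xF u(2)] Sx by simp
          thus "- (RF x + zs \<bullet> (A *v x) - RG zs) \<le> - (RF x + u \<bullet> (A *v x) - RG u)"
            by (simp add: Px_def)
        qed
        thus "RF x + w \<bullet> (A *v x) - RG w \<le> Px" by (simp add: Px_def)
      qed
      have "g (A *v x) \<le> ereal (zs \<bullet> (A *v x) - RG zs)"
      proof (rule FM_le[OF g_cc g_proper])
        fix w
        show "ereal (w \<bullet> (A *v x)) - conj_fun g w \<le> ereal (zs \<bullet> (A *v x) - RG zs)"
        proof (cases "w \<in> DG")
          case True
          thus ?thesis using gmax[OF True] Gre[OF True] by (simp add: G_def Px_def)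
        next
          case False thus ?thesis by (simp add: DGi)
        qed
      qed
      hence "F x + g (A *v x) \<le> ereal (RF x + (zs \<bullet> (A *v x) - RG zs))"
        unfolding Fre[OF xF] by (rule add_re)
      hence px: "primal_obj f g h A x \<le> ereal Px" by (simp add: primal_eq Px_def add_diff_eq)
      have "ereal Px \<le> primal_obj f g h A xs" unfolding PP Pz_def by (rule L2[OF xsF zG])
      hence "\<forall>y. primal_obj f g h A x \<le> primal_obj f g h A y"
        using px xs(1) unfolding primal_optimal_def by (meson order_trans)
      moreover have "primal_obj f g h A x < \<infinity>" using px by (cases "primal_obj f g h A x") auto
      ultimately have P1: "primal_optimal f g h A x" by (simp add: primal_optimal_def)
      define q where "q = transpose A *v z"
      have qx: "\<And>x. q \<bullet> x = z \<bullet> (A *v x)" by (simp add: q_def dot_lmul_matrix)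
      have xmin: "\<And>u. u \<in> DF \<Longrightarrow> Pz \<le> RF u + q \<bullet> u - RG z"
      proof -
        fix u assume uF: "u \<in> DF"
        have "(\<lambda>u. RF u + q \<bullet> u - RG z) xs \<le> (\<lambda>u. RF u + q \<bullet> u - RG z) u"
        proof (rule loc_glob[where D = DF and X = X])
          fix t :: real assume t: "0 \<le> t" "t \<le> 1"
          from Fconv[OF xsF uF t] have c: "(1-t) *\<^sub>R xs + t *\<^sub>R u \<in> DF"
            "RF ((1-t) *\<^sub>R xs + t *\<^sub>R u) \<le> (1-t) * RF xs + t * RF u" by auto
          have e: "q \<bullet> ((1-t) *\<^sub>R xs + t *\<^sub>R u) = (1-t) * (q \<bullet> xs) + t * (q \<bullet> u)"
            by (simp add: inner_add_right)
          show "(1-t) *\<^sub>R xs + t *\<^sub>R u \<in> DF \<and>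
            RF ((1-t) *\<^sub>R xs + t *\<^sub>R u) + q \<bullet> ((1-t) *\<^sub>R xs + t *\<^sub>R u) - RG z
            \<le> (1-t) * (RF xs + q \<bullet> xs - RG z) + t * (RF u + q \<bullet> u - RG z)"
            using c unfolding e by (simp add: algebra_simps)
        next
          show "xs \<in> interior X" by (rule xs(2))
        next
          fix v assume v: "v \<in> X" "v \<in> DF"
          have "I \<le> lagrangian f g h A v z" unfolding I_def by (rule INF_lower[OF v(1)])
          hence "Pz \<le> RF v + z \<bullet> (A *v v) - RG z" using Lre[OF v(2) zG] Iz by simp
          thus "RF xs + q \<bullet> xs - RG z \<le> RF v + q \<bullet> v - RG z"
            by (simp add: Pz_def qx)
        qed
        thus "Pz \<le> RF u + q \<bullet> u - RG z" by (simp add: Pz_def qx)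
      qed
      have CB: "conj_fun F (- q) \<le> ereal (- (q \<bullet> xs) - RF xs)"
      proof (rule conj_le[OF _ Fninf])
        fix y r assume yr: "F y = ereal r"
        hence yF: "y \<in> DF" by (simp add: DF_def edom_def)
        have "r = RF y" using yr by (simp add: RF_def)
        thus "(- q) \<bullet> y - r \<le> - (q \<bullet> xs) - RF xs" using xmin[OF yF] by (simp add: Pz_def qx)
      qed
      have de: "dual_obj f g h A z = - conj_fun F (- q) - G z" unfolding q_def by (rule dual_eq)
      have dz: "ereal Pz \<le> dual_obj f g h A z" using CB FCninf[of "- q"] Gre[OF zG] unfolding de
        by (cases "conj_fun F (- q)") (auto simp: qx Pz_def)
      have "dual_obj f g h A zs \<le> ereal Px" unfolding Px_def by (rule L1[OF xF zsG])
      hence "\<forall>w. dual_obj f g h A w \<le> dual_obj f g h A z"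
        using dz zs(1) PP unfolding dual_optimal_def by (meson order_trans)
      moreover have "dual_obj f g h A z > -\<infinity>" using dz by (cases "dual_obj f g h A z") auto
      ultimately have D1: "dual_optimal f g h A z" by (simp add: dual_optimal_def)
      show "primal_optimal f g h A x \<and> dual_optimal f g h A z" using P1 D1 by simp
    qed
    ultimately show "gap_eta f g h A X Z x z \<ge> 0 \<and> (gap_eta f g h A X Z x z = 0 \<longrightarrow>
                primal_optimal f g h A x \<and> dual_optimal f g h A z)" by simp
  qed
qed

end
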